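(* Consider a feasible solution of a division and assignment problem $(T; \{U_1,\dots,U_p\}, V)$ in which $V$ has $v$ columns, together with a value-preserving bijection between the entry positions of $T$ and the entry positions of $U_1,\dots,U_p,V$. If $(A,B)$ is an inseparable $(T,V)$-pair with $a = |A|$ and $b = |B|$, then $a \le (v-1)b + 1$.
   Context: A division and assignment problem $(T;\{U_1,\dots,U_p\},V)$ consists of matrices $T$ (supply matrix) and $U_1,\dots,U_p,V$ (demand matrices), each with prescribed dimensions and prescribed common row sum per matrix; a feasible solution fills all matrices with real numbers so that all row sums are met and the multiset of entries of $T$ equals the multiset union of the entries of $U_1,\dots,U_p,V$. Fix such a solution together with a bijection $\phi$ from the entry positions of $U_1,\dots,U_p,V$ onto the entry positions of $T$ preserving values; an entry of $V$ is said to lie in the row of $T$ containing its image under $\phi$. A $(T,V)$-pair is a pair $(A,B)$ where $A$ is a set of rows of $T$ and $B$ is a set of rows of $V$ such that every entry of every row in $B$ lies in a row of $A$, and every row of $A$ contains at least one entry of a row of $B$. A $(T,V)$-pair $(A,B)$ is inseparable if there do not exist $(T,V)$-pairs $(A_1,B_1)$ and $(A_2,B_2)$ with $A_1\cap A_2=\emptyset$, $A_1\cup A_2=A$, $B_1\cap B_2=\emptyset$, $B_1\cup B_2 = B$. *)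

theory Defs
  imports Complex_Main "HOL-Library.Multiset"
begin

text \<open>Matrices are functions nat => nat => real together with explicit dimensions.
  The demand matrices U_q (q < p) have mU q rows, nU q columns, common row sum sU q
  (they are given as one function U q i j).
  Entry positions of the demand matrices are encoded as
  Inl (q, i, j) for entry (i,j) of U_q and Inr (k, l) for entry (k,l) of V.\<close>

type_synonym dpos = "(nat \<times> nat \<times> nat) + (nat \<times> nat)"

definition T_positions :: "nat \<Rightarrow> nat \<Rightarrow> (nat \<times> nat) set" where
  "T_positions m n = {..<m} \<times> {..<n}"

definition D_positions :: "nat \<Rightarrow> (nat \<Rightarrow> nat) \<Rightarrow> (nat \<Rightarrow> nat) \<Rightarrow> nat \<Rightarrow> nat \<Rightarrow> dpos set" where
  "D_positions p mU nU mV v =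
     Inl ` {(q, i, j). q < p \<and> i < mU q \<and> j < nU q} \<union> Inr ` ({..<mV} \<times> {..<v})"

definition D_value :: "(nat \<Rightarrow> nat \<Rightarrow> nat \<Rightarrow> real) \<Rightarrow> (nat \<Rightarrow> nat \<Rightarrow> real) \<Rightarrow> dpos \<Rightarrow> real" where
  "D_value U V x = (case x of Inl (q, i, j) \<Rightarrow> U q i j | Inr (k, l) \<Rightarrow> V k l)"

definition feasible ::
  "nat \<Rightarrow> nat \<Rightarrow> real \<Rightarrow> (nat \<Rightarrow> nat \<Rightarrow> real) \<Rightarrow>
   nat \<Rightarrow> (nat \<Rightarrow> nat) \<Rightarrow> (nat \<Rightarrow> nat) \<Rightarrow> (nat \<Rightarrow> real) \<Rightarrow> (nat \<Rightarrow> nat \<Rightarrow> nat \<Rightarrow> real) \<Rightarrow>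
   nat \<Rightarrow> nat \<Rightarrow> real \<Rightarrow> (nat \<Rightarrow> nat \<Rightarrow> real) \<Rightarrow> bool" where
  "feasible m n t T p mU nU sU U mV v s V \<longleftrightarrow>
     (\<forall>i<m. (\<Sum>j<n. T i j) = t) \<and>
     (\<forall>q<p. \<forall>i<mU q. (\<Sum>j<nU q. U q i j) = sU q) \<and>
     (\<forall>k<mV. (\<Sum>l<v. V k l) = s) \<and>
     image_mset (\<lambda>(i, j). T i j) (mset_set (T_positions m n)) =
       image_mset (D_value U V) (mset_set (D_positions p mU nU mV v))"

definition value_bij ::
  "nat \<Rightarrow> nat \<Rightarrow> (nat \<Rightarrow> nat \<Rightarrow> real) \<Rightarrow> nat \<Rightarrow> (nat \<Rightarrow> nat) \<Rightarrow> (nat \<Rightarrow> nat) \<Rightarrow>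
   (nat \<Rightarrow> nat \<Rightarrow> nat \<Rightarrow> real) \<Rightarrow> nat \<Rightarrow> nat \<Rightarrow> (nat \<Rightarrow> nat \<Rightarrow> real) \<Rightarrow>
   (dpos \<Rightarrow> nat \<times> nat) \<Rightarrow> bool" where
  "value_bij m n T p mU nU U mV v V \<phi> \<longleftrightarrow>
     bij_betw \<phi> (D_positions p mU nU mV v) (T_positions m n) \<and>
     (\<forall>x \<in> D_positions p mU nU mV v. T (fst (\<phi> x)) (snd (\<phi> x)) = D_value U V x)"

definition Vrow_in_T :: "(dpos \<Rightarrow> nat \<times> nat) \<Rightarrow> nat \<Rightarrow> nat \<Rightarrow> nat" where
  "Vrow_in_T \<phi> k l = fst (\<phi> (Inr (k, l)))"

definition TV_pair :: "nat \<Rightarrow> nat \<Rightarrow> nat \<Rightarrow> (dpos \<Rightarrow> nat \<times> nat) \<Rightarrow> nat set \<Rightarrow> nat set \<Rightarrow> bool" where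
  "TV_pair m mV v \<phi> A B \<longleftrightarrow>
     A \<subseteq> {..<m} \<and> B \<subseteq> {..<mV} \<and>
     (\<forall>k\<in>B. \<forall>l<v. Vrow_in_T \<phi> k l \<in> A) \<and>
     (\<forall>i\<in>A. \<exists>k\<in>B. \<exists>l<v. Vrow_in_T \<phi> k l = i)"

text \<open>Inseparable: not a disjoint union of two nontrivial (T,V)-pairs
  (the parts are required to differ from the empty pair ({},{}), since otherwise
  every pair would split trivially).\<close>
definition inseparable :: "nat \<Rightarrow> nat \<Rightarrow> nat \<Rightarrow> (dpos \<Rightarrow> nat \<times> nat) \<Rightarrow> nat set \<Rightarrow> nat set \<Rightarrow> bool" where
  "inseparable m mV v \<phi> A B \<longleftrightarrow>
     TV_pair m mV v \<phi> A B \<and>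
     \<not> (\<exists>A1 B1 A2 B2.
          TV_pair m mV v \<phi> A1 B1 \<and> TV_pair m mV v \<phi> A2 B2 \<and>
          (A1, B1) \<noteq> ({}, {}) \<and> (A2, B2) \<noteq> ({}, {}) \<and>
          A1 \<inter> A2 = {} \<and> A1 \<union> A2 = A \<and> B1 \<inter> B2 = {} \<and> B1 \<union> B2 = B)"

end

theory Submission
  imports Defs
begin

definition RR :: "(dpos \<Rightarrow> nat \<times> nat) \<Rightarrow> nat \<Rightarrow> nat \<Rightarrow> nat set" where
  "RR \<phi> v k = (\<lambda>l. Vrow_in_T \<phi> k l) ` {..<v}"

lemma RR_card: "card (RR \<phi> v k) \<le> v"
  unfolding RR_def using card_image_le[of "{..<v}"] by simp

lemma RR_fin: "finite (RR \<phi> v k)"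
  unfolding RR_def by simp

lemma grow:
  assumes ins: "inseparable m mV v \<phi> A B"
  shows "1 \<le> n \<Longrightarrow> n \<le> card B \<Longrightarrow> \<exists>S\<subseteq>B. card S = n \<and>
           int (card (\<Union>k\<in>S. RR \<phi> v k)) \<le> (int v - 1) * int n + 1"
proof (induction n)
  case 0
  then show ?case by simp
next
  case (Suc n)
  have tv: "TV_pair m mV v \<phi> A B" using ins unfolding inseparable_def by simp
  have tvA: "A \<subseteq> {..<m}" and tvB: "B \<subseteq> {..<mV}"
    and tv3: "\<forall>k\<in>B. \<forall>l<v. Vrow_in_T \<phi> k l \<in> A"
    and tv4: "\<forall>i\<in>A. \<exists>k\<in>B. \<exists>l<v. Vrow_in_T \<phi> k l = i"
    using tv unfolding TV_pair_def by simp_all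
  have finB: "finite B" using tvB finite_subset by blast
  show ?case
  proof (cases "n = 0")
    case True
    then have "B \<noteq> {}" using Suc by auto
    then obtain k where k: "k \<in> B" by blast
    show ?thesis
      by (rule exI[of _ "{k}"]) (use k True RR_card[of \<phi> v k] in auto)
  next
    case False
    then obtain S where S: "S \<subseteq> B" "card S = n"
      "int (card (\<Union>k\<in>S. RR \<phi> v k)) \<le> (int v - 1) * int n + 1"
      using Suc by auto
    have finS: "finite S" using S(1) finB finite_subset by blast
    have "S \<noteq> B" using S Suc by auto
    have "\<exists>k\<in>B - S. RR \<phi> v k \<inter> (\<Union>k\<in>S. RR \<phi> v k) \<noteq> {}"
    proof (rule ccontr)
      assume nk: "\<not> ?thesis"
      define A1 where "A1 = (\<Union>k\<in>S. RR \<phi> v k)"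
      define A2 where "A2 = (\<Union>k\<in>B-S. RR \<phi> v k)"
      have AU: "A = A1 \<union> A2"
      proof
        show "A \<subseteq> A1 \<union> A2"
        proof
          fix i assume "i \<in> A"
          then obtain k l where "k \<in> B" "l < v" "Vrow_in_T \<phi> k l = i"
            using tv4 by blast
          then show "i \<in> A1 \<union> A2" unfolding A1_def A2_def RR_def by blast
        qed
        show "A1 \<union> A2 \<subseteq> A" using tv3 S(1) unfolding A1_def A2_def RR_def by blast
      qed
      have disj: "A1 \<inter> A2 = {}" using nk unfolding A1_def A2_def by blast
      have t1: "TV_pair m mV v \<phi> A1 S"
        unfolding TV_pair_def
      proof (intro conjI)
        show "A1 \<subseteq> {..<m}" using AU tvA by blast
        show "S \<subseteq> {..<mV}" using S(1) tvB by blast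
        show "\<forall>k\<in>S. \<forall>l<v. Vrow_in_T \<phi> k l \<in> A1" unfolding A1_def RR_def by blast
        show "\<forall>i\<in>A1. \<exists>k\<in>S. \<exists>l<v. Vrow_in_T \<phi> k l = i" unfolding A1_def RR_def by blast
      qed
      have t2: "TV_pair m mV v \<phi> A2 (B - S)"
        unfolding TV_pair_def
      proof (intro conjI)
        show "A2 \<subseteq> {..<m}" using AU tvA by blast
        show "(B - S) \<subseteq> {..<mV}" using tvB by blast
        show "\<forall>k\<in>(B - S). \<forall>l<v. Vrow_in_T \<phi> k l \<in> A2" unfolding A2_def RR_def by blast
        show "\<forall>i\<in>A2. \<exists>k\<in>(B - S). \<exists>l<v. Vrow_in_T \<phi> k l = i" unfolding A2_def RR_def by blast
      qed
      have "S \<noteq> {}" using S False by auto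
      moreover have "B - S \<noteq> {}" using \<open>S \<noteq> B\<close> S(1) by blast
      ultimately have "TV_pair m mV v \<phi> A1 S \<and> TV_pair m mV v \<phi> A2 (B - S) \<and>
          (A1, S) \<noteq> ({}, {}) \<and> (A2, B - S) \<noteq> ({}, {}) \<and>
          A1 \<inter> A2 = {} \<and> A1 \<union> A2 = A \<and> S \<inter> (B - S) = {} \<and> S \<union> (B - S) = B"
        using t1 t2 disj AU S(1) by (intro conjI; simp; blast)
      moreover have nsep: "\<not> (\<exists>A1 B1 A2 B2.
          TV_pair m mV v \<phi> A1 B1 \<and> TV_pair m mV v \<phi> A2 B2 \<and>
          (A1, B1) \<noteq> ({}, {}) \<and> (A2, B2) \<noteq> ({}, {}) \<and>
          A1 \<inter> A2 = {} \<and> A1 \<union> A2 = A \<and> B1 \<inter> B2 = {} \<and> B1 \<union> B2 = B)"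
        using ins unfolding inseparable_def by (elim conjE)
      ultimately show False by (elim notE) (rule exI)+
    qed
    then obtain k where k: "k \<in> B" "k \<notin> S" and ov: "RR \<phi> v k \<inter> (\<Union>k\<in>S. RR \<phi> v k) \<noteq> {}"
      by blast
    have eq: "(\<Union>j\<in>insert k S. RR \<phi> v j) = RR \<phi> v k \<union> (\<Union>j\<in>S. RR \<phi> v j)" by blast
    have fU: "finite (\<Union>j\<in>S. RR \<phi> v j)" using finS RR_fin by blast
    have "card (RR \<phi> v k \<union> (\<Union>j\<in>S. RR \<phi> v j)) + card (RR \<phi> v k \<inter> (\<Union>j\<in>S. RR \<phi> v j))
          = card (RR \<phi> v k) + card (\<Union>j\<in>S. RR \<phi> v j)"
      using card_Un_Int[OF RR_fin fU] by simp
    moreover have "card (RR \<phi> v k \<inter> (\<Union>j\<in>S. RR \<phi> v j)) \<ge> 1"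
      using ov fU by (simp add: Suc_le_eq card_gt_0_iff)
    moreover have "card (RR \<phi> v k) \<le> v" by (rule RR_card)
    ultimately have "int (card (\<Union>j\<in>insert k S. RR \<phi> v j)) \<le> int v - 1 + int (card (\<Union>j\<in>S. RR \<phi> v j))"
      unfolding eq by linarith
    also have "\<dots> \<le> (int v - 1) * int (Suc n) + 1" using S(3) by (simp add: algebra_simps)
    finally show ?thesis
      by (intro exI[of _ "insert k S"]) (use k S finS in auto)
  qed
qed

theorem lemma3:
  fixes T :: "nat \<Rightarrow> nat \<Rightarrow> real" and U :: "nat \<Rightarrow> nat \<Rightarrow> nat \<Rightarrow> real"
    and V :: "nat \<Rightarrow> nat \<Rightarrow> real" and \<phi> :: "dpos \<Rightarrow> nat \<times> nat"
  assumes "feasible m n t T p mU nU sU U mV v s V"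
    and "value_bij m n T p mU nU U mV v V \<phi>"
    and "inseparable m mV v \<phi> A B"
  shows "int (card A) \<le> (int v - 1) * int (card B) + 1"
proof -
  have tv: "TV_pair m mV v \<phi> A B" using assms(3) unfolding inseparable_def by simp
  have tvB: "B \<subseteq> {..<mV}"
    and tv3: "\<forall>k\<in>B. \<forall>l<v. Vrow_in_T \<phi> k l \<in> A"
    and tv4: "\<forall>i\<in>A. \<exists>k\<in>B. \<exists>l<v. Vrow_in_T \<phi> k l = i"
    using tv unfolding TV_pair_def by simp_all
  have finB: "finite B" using tvB finite_subset by blast
  show ?thesis
  proof (cases "B = {}")
    case True
    then have "A = {}" using tv4 by auto
    then show ?thesis using True by simp
  next
    case False
    then have "1 \<le> card B" using finB by (simp add: Suc_le_eq card_gt_0_iff)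
    then obtain S where S: "S \<subseteq> B" "card S = card B"
      "int (card (\<Union>k\<in>S. RR \<phi> v k)) \<le> (int v - 1) * int (card B) + 1"
      using grow[OF assms(3)] by blast
    have "S = B" using card_subset_eq[OF finB S(1) S(2)] .
    have AB: "A = (\<Union>k\<in>B. RR \<phi> v k)"
    proof
      show "A \<subseteq> (\<Union>k\<in>B. RR \<phi> v k)"
      proof
        fix i assume "i \<in> A"
        then obtain k l where "k \<in> B" "l < v" "Vrow_in_T \<phi> k l = i"
          using tv4 by blast
        then show "i \<in> (\<Union>k\<in>B. RR \<phi> v k)" unfolding RR_def by blast
      qed
      show "(\<Union>k\<in>B. RR \<phi> v k) \<subseteq> A" using tv3 unfolding RR_def by blast
    qed
    show ?thesis using S(3) unfolding \<open>S = B\<close> AB[symmetric] .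
  qed
qed

end
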